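(* Let $N\ge3$ and let $G$ be the graph on vertices $\{u_{1j},b_{1j},u_{2j}: j\in[N]\}$ with edges $u_{1j}\sim u_{1k}$ and $u_{2j}\sim u_{2k}$ for $j\ne k$, $b_{1j}\sim u_{1k}$ for all $j,k$, and $u_{1j}\sim u_{2j}$, $u_{2j}\sim b_{1j}$ for all $j$. For $U\subseteq[N]$ with $2\le|U|\le N-1$, $m\in[N]\setminus U$ and $U\subseteq V\subseteq[N]$, let $\mathbf v(m,U,V)$ be the weight vector with $u_{1m}=|U|^{-1}$, $b_{1j}=1-|U|^{-1}$ for $j\in V$, $u_{2j}=|U|^{-1}$ for $j\in U$, and all other coordinates $0$. Then the fractional weighted chromatic number of $G$ with weight vector $\mathbf v(m,U,V)$ is at most $1+|U|^{-1}-|U|^{-2}$, and hence at most $1.25$.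
   Context: The fractional weighted chromatic number of a graph with weights $w\ge0$ on vertices is $\min\sum_i\lambda_i$ over nonnegative reals $\lambda_i$ and stable sets $S_i$ with $\sum_i\lambda_i\chi^{S_i}=w$, where $\chi^S$ is the incidence vector of $S$. *)

theory Defs
  imports Main "HOL-Library.Indicator_Function" Complex_Main
begin

definition stable_set :: "'v set \<Rightarrow> ('v \<Rightarrow> 'v \<Rightarrow> bool) \<Rightarrow> 'v set \<Rightarrow> bool" where
  "stable_set Vs E S \<longleftrightarrow> S \<subseteq> Vs \<and> (\<forall>x\<in>S. \<forall>y\<in>S. \<not> E x y)"

definition stable_sets :: "'v set \<Rightarrow> ('v \<Rightarrow> 'v \<Rightarrow> bool) \<Rightarrow> 'v set set" where
  "stable_sets Vs E = {S. stable_set Vs E S}"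

text \<open>Fractional weighted chromatic number: minimum of the total weight
sum over nonnegative coefficients on stable sets whose weighted sum of
incidence vectors equals w on Vs (for finite Vs there are finitely many
stable sets, so a family of coefficients is a function on them).\<close>

definition frac_wchrom :: "'v set \<Rightarrow> ('v \<Rightarrow> 'v \<Rightarrow> bool) \<Rightarrow> ('v \<Rightarrow> real) \<Rightarrow> real" where
  "frac_wchrom Vs E w = Inf {(\<Sum>S\<in>stable_sets Vs E. lam S) | lam.
      (\<forall>S\<in>stable_sets Vs E. lam S \<ge> 0) \<and>
      (\<forall>v\<in>Vs. (\<Sum>S\<in>stable_sets Vs E. lam S * indicator S v) = w v)}"

datatype vtx = U1 nat | B1 nat | U2 nat

definition G_verts :: "nat \<Rightarrow> vtx set" where
  "G_verts N = U1 ` {1..N} \<union> B1 ` {1..N} \<union> U2 ` {1..N}"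

fun G_edge0 :: "vtx \<Rightarrow> vtx \<Rightarrow> bool" where
  "G_edge0 (U1 j) (U1 k) = (j \<noteq> k)"
| "G_edge0 (U2 j) (U2 k) = (j \<noteq> k)"
| "G_edge0 (B1 j) (U1 k) = True"
| "G_edge0 (U1 j) (U2 k) = (j = k)"
| "G_edge0 (U2 j) (B1 k) = (j = k)"
| "G_edge0 _ _ = False"

definition G_adj :: "vtx \<Rightarrow> vtx \<Rightarrow> bool" where
  "G_adj x y \<longleftrightarrow> G_edge0 x y \<or> G_edge0 y x"

definition wvec :: "nat \<Rightarrow> nat set \<Rightarrow> nat set \<Rightarrow> vtx \<Rightarrow> real" where
  "wvec m U V x = (case x of
      U1 j \<Rightarrow> (if j = m then 1 / real (card U) else 0)
    | B1 j \<Rightarrow> (if j \<in> V then 1 - 1 / real (card U) else 0)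
    | U2 j \<Rightarrow> (if j \<in> U then 1 / real (card U) else 0))"

end

theory Submission
  imports Defs
begin

definition Sj :: "nat set \<Rightarrow> nat \<Rightarrow> vtx set" where
  "Sj V j = insert (U2 j) (B1 ` (V - {j}))"
definition fam :: "nat \<Rightarrow> nat set \<Rightarrow> nat set \<Rightarrow> nat \<times> nat \<Rightarrow> vtx set" where
  "fam m U V p = (if fst p = 0 then Sj V (snd p) else if fst p = 1 then {U2 (snd p), U1 m} else B1 ` U)"
definition coef :: "real \<Rightarrow> real \<Rightarrow> real \<Rightarrow> nat \<times> nat \<Rightarrow> real" where
  "coef a b c p = (if fst p = 0 then a else if fst p = 1 then b else c)"
definition Iset :: "nat set \<Rightarrow> (nat \<times> nat) set" where
  "Iset U = Pair 0 ` U \<union> Pair 1 ` U \<union> {(2,0)}"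

lemma sum_Iset:
  assumes "finite U"
  shows "sum g (Iset U) = (\<Sum>j\<in>U. g (0,j)) + (\<Sum>j\<in>U. g (1,j)) + g (2,0)"
proof -
  have d1: "(Pair (0::nat) ` U) \<inter> (Pair 1 ` U) = {}" by auto
  have d2: "(Pair (0::nat) ` U \<union> Pair 1 ` U) \<inter> {(2,0)} = {}" by auto
  have "sum g (Iset U) = sum g (Pair 0 ` U \<union> Pair 1 ` U) + g (2,0)"
    unfolding Iset_def using assms d2 by (subst sum.union_disjoint) auto
  also have "sum g (Pair 0 ` U \<union> Pair 1 ` U) = sum g (Pair 0 ` U) + sum g (Pair 1 ` U)"
    using assms d1 by (subst sum.union_disjoint) auto
  also have "sum g (Pair 0 ` U) = (\<Sum>j\<in>U. g (0,j))"
    by (subst sum.reindex) (auto simp: inj_on_def)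
  also have "sum g (Pair 1 ` U) = (\<Sum>j\<in>U. g (1,j))"
    by (subst sum.reindex) (auto simp: inj_on_def)
  finally show ?thesis .
qed

theorem theorem11:
  fixes N m :: nat and U V :: "nat set"
  assumes "N \<ge> 3"
    and "U \<subseteq> {1..N}" and "2 \<le> card U" and "card U \<le> N - 1"
    and "m \<in> {1..N} - U"
    and "U \<subseteq> V" and "V \<subseteq> {1..N}"
  shows "frac_wchrom (G_verts N) G_adj (wvec m U V)
           \<le> 1 + 1 / real (card U) - 1 / (real (card U))^2
       \<and> frac_wchrom (G_verts N) G_adj (wvec m U V) \<le> 1.25"
proof -
  define k where "k = real (card U)"
  define t where "t = 1 / k"
  have finU: "finite U" using assms(2) finite_subset by blast
  have k2: "k \<ge> 2" using assms(3) k_def by simp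
  have kt: "k * t = 1" using k2 t_def by simp
  have t0: "t \<ge> 0" "t \<le> 1/2" unfolding t_def using k2 by (auto simp: field_simps)
  define a where "a = t - t^2"
  define b where "b = t^2"
  define c where "c = (1 - t) * t"
  have a0: "a \<ge> 0" using t0 unfolding a_def power2_eq_square
    by (simp add: mult_left_le)
  have b0: "b \<ge> 0" unfolding b_def by simp
  have c0: "c \<ge> 0" using t0 unfolding c_def by simp
  define SS where "SS = stable_sets (G_verts N) G_adj"
  define F where "F = fam m U V"
  define C where "C = coef a b c"
  define I where "I = Iset U"
  define lam where "lam S = (\<Sum>i\<in>{i\<in>I. F i = S}. C i)" for S
  have finI: "finite I" unfolding I_def Iset_def using finU by auto
  have finSS: "finite SS"
  proof -
    have "SS \<subseteq> Pow (G_verts N)" unfolding SS_def stable_sets_def stable_set_def by auto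
    moreover have "finite (G_verts N)" unfolding G_verts_def by auto
    ultimately show ?thesis using finite_subset by blast
  qed
  have mN: "m \<in> {1..N}" "m \<notin> U" using assms(5) by auto
  have FI: "F ` I \<subseteq> SS"
  proof
    fix S assume "S \<in> F ` I"
    then obtain i where i: "i \<in> I" "S = F i" by auto
    show "S \<in> SS"
      using i assms(2,6,7) mN
      unfolding I_def Iset_def F_def fam_def SS_def stable_sets_def stable_set_def Sj_def G_verts_def
      by (auto simp: G_adj_def)
  qed
  have C0: "\<And>i. C i \<ge> 0" unfolding C_def coef_def using a0 b0 c0 by auto
  have lam0: "\<forall>S\<in>SS. lam S \<ge> 0" unfolding lam_def using C0 by (simp add: sum_nonneg)
  have sumlam: "(\<Sum>S\<in>SS. lam S) = (\<Sum>i\<in>I. C i)"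
    unfolding lam_def by (rule sum.group[OF finI finSS FI])
  have total: "(\<Sum>i\<in>I. C i) = 1 + t - t^2"
  proof -
    have "(\<Sum>i\<in>I. C i) = k * a + k * b + c"
      unfolding I_def using finU by (simp add: sum_Iset C_def coef_def k_def)
    also have "\<dots> = k * t + c" unfolding a_def b_def by (simp add: algebra_simps)
    finally show ?thesis using kt unfolding c_def by (simp add: algebra_simps power2_eq_square)
  qed
  have cover: "\<forall>v\<in>G_verts N. (\<Sum>S\<in>SS. lam S * indicator S v) = wvec m U V v"
  proof
    fix v assume v: "v \<in> G_verts N"
    have "(\<Sum>S\<in>SS. lam S * indicator S v) = (\<Sum>S\<in>SS. \<Sum>i\<in>{i\<in>I. F i = S}. C i * indicator (F i) v)"
      unfolding lam_def by (rule sum.cong) (auto simp: sum_distrib_right)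
    also have "\<dots> = (\<Sum>i\<in>I. C i * indicator (F i) v)"
      by (rule sum.group[OF finI finSS FI])
    also have "\<dots> = (\<Sum>j\<in>U. a * indicator (Sj V j) v) + (\<Sum>j\<in>U. b * indicator {U2 j, U1 m} v)
                    + c * indicator (B1 ` U) v"
      unfolding I_def using finU by (simp add: sum_Iset C_def coef_def F_def fam_def)
    also have "\<dots> = wvec m U V v"
    proof (cases v)
      case (U1 x)
      have "(\<Sum>j\<in>U. b * indicator {U2 j, U1 m} v) = (if x = m then k * b else 0)"
        using U1 by (simp add: indicator_def k_def)
      moreover have "(\<Sum>j\<in>U. a * indicator (Sj V j) v) = 0"
        using U1 by (auto simp: indicator_def Sj_def intro!: sum.neutral)
      ultimately show ?thesis using U1 kt t_def k_def unfolding b_def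
        by (auto simp: indicator_def wvec_def power2_eq_square)
    next
      case (U2 x)
      have "(\<Sum>j\<in>U. a * indicator (Sj V j) v) = (\<Sum>j\<in>U. if j = x then a else 0)"
        using U2 by (intro sum.cong) (auto simp: indicator_def Sj_def)
      also have "\<dots> = (if x \<in> U then a else 0)" using finU by simp
      finally have 1: "(\<Sum>j\<in>U. a * indicator (Sj V j) v) = (if x \<in> U then a else 0)" .
      have "(\<Sum>j\<in>U. b * indicator {U2 j, U1 m} v) = (\<Sum>j\<in>U. if j = x then b else 0)"
        using U2 by (intro sum.cong) (auto simp: indicator_def)
      also have "\<dots> = (if x \<in> U then b else 0)" using finU by simp
      finally have 2: "(\<Sum>j\<in>U. b * indicator {U2 j, U1 m} v) = (if x \<in> U then b else 0)" .
      show ?thesis using 1 2 U2 unfolding a_def b_def t_def k_def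
        by (auto simp: indicator_def wvec_def)
    next
      case (B1 x)
      have 2: "(\<Sum>j\<in>U. b * indicator {U2 j, U1 m} v) = 0"
        using B1 by (simp add: indicator_def)
      have "(\<Sum>j\<in>U. a * indicator (Sj V j) v) = (\<Sum>j\<in>U. if x \<in> V \<and> j \<noteq> x then a else 0)"
        using B1 by (intro sum.cong) (auto simp: indicator_def Sj_def)
      also have "\<dots> = (if x \<in> V then a * real (card (U - {x})) else 0)"
      proof (cases "x \<in> V")
        case True
        have "(\<Sum>j\<in>U. if x \<in> V \<and> j \<noteq> x then a else 0) = (\<Sum>j\<in>U. if j \<in> U - {x} then a else 0)"
          using True by (intro sum.cong) auto
        also have "\<dots> = (\<Sum>j\<in>U - {x}. a)" using finU
          by (subst sum.inter_restrict[symmetric]) (auto intro: sum.cong simp: Int_absorb1)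
        finally show ?thesis using True by simp
      qed simp
      finally have 1: "(\<Sum>j\<in>U. a * indicator (Sj V j) v) = (if x \<in> V then a * real (card (U - {x})) else 0)" .
      have cd: "real (card (U - {x})) = (if x \<in> U then k - 1 else k)"
        using finU k2 unfolding k_def by (auto simp: card_Diff_singleton of_nat_diff)
      have ka: "k * a = 1 - t" using kt unfolding a_def by (simp add: algebra_simps power2_eq_square)
      have kac: "(k - 1) * a + c = 1 - t" using ka unfolding a_def c_def
        by (simp add: algebra_simps power2_eq_square)
      show ?thesis using 1 2 B1 cd ka kac assms(6) unfolding t_def k_def
        by (auto simp: indicator_def wvec_def mult.commute)
    qed
    finally show "(\<Sum>S\<in>SS. lam S * indicator S v) = wvec m U V v" .
  qed
  have mem: "1 + t - t^2 \<in> {(\<Sum>S\<in>SS. lam S) | lam.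
      (\<forall>S\<in>SS. lam S \<ge> 0) \<and> (\<forall>v\<in>G_verts N. (\<Sum>S\<in>SS. lam S * indicator S v) = wvec m U V v)}"
    unfolding mem_Collect_eq by (intro exI[of _ lam] conjI) (use lam0 cover sumlam total in auto)
  have bdd: "bdd_below {(\<Sum>S\<in>SS. lam S) | lam.
      (\<forall>S\<in>SS. lam S \<ge> 0) \<and> (\<forall>v\<in>G_verts N. (\<Sum>S\<in>SS. lam S * indicator S v) = wvec m U V v)}"
    by (rule bdd_belowI[where m=0]) (auto intro: sum_nonneg)
  have le: "frac_wchrom (G_verts N) G_adj (wvec m U V) \<le> 1 + t - t^2"
    unfolding frac_wchrom_def SS_def[symmetric] by (rule cInf_lower[OF mem bdd])
  have q: "1 + t - t^2 \<le> 1.25"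
  proof -
    have "0 \<le> (t - 1/2)^2" by simp
    thus ?thesis by (simp add: power2_eq_square algebra_simps)
  qed
  show ?thesis using le q unfolding t_def k_def by (simp add: power_one_over)
qed

end
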